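(* If $\tau$ is a tau function of the Pfaff–Toda hierarchy, then $$\tfrac12D_{t_1}D_{\bar t_1}\tau(s,r)\cdot\tau(s,r)+\tau(s-1,r)\tau(s+1,r)-\tau(s,r-1)\tau(s,r+1)=0$$ and $$D_{t_1}\tau(s,r)\cdot\tau(s+1,r-1)+D_{\bar t_1}\tau(s,r-1)\cdot\tau(s+1,r)=0.$$
   Context: Let $\boldsymbol t=(t_1,t_2,\dots)$, $\bar{\boldsymbol t}=(\bar t_1,\bar t_2,\dots)$ be infinite sequences of continuous variables and $s,r\in\mathbb Z$. Put $[z]=(z,z^2/2,z^3/3,\dots)$, $\xi(\boldsymbol t,z)=\sum_{k\ge1}t_kz^k$. For a formal Laurent series $f(z)=\sum_na_nz^n$ write $\oint\frac{dz}{2\pi i}f(z)=a_{-1}$. A tau function of the Pfaff–Toda hierarchy is a nowhere vanishing function $\tau(s,r,\boldsymbol t,\bar{\boldsymbol t})$ such that for all $(s,r,\boldsymbol t,\bar{\boldsymbol t})$, $(s',r',\boldsymbol t',\bar{\boldsymbol t}')$: $$\oint\frac{dz}{2\pi i}z^{s'+r'-s-r}e^{\xi(\boldsymbol t'-\boldsymbol t,z)}\tau(s',r',\boldsymbol t'-[z^{-1}],\bar{\boldsymbol t}')\tau(s,r,\boldsymbol t+[z^{-1}],\bar{\boldsymbol t})+\oint\frac{dz}{2\pi i}z^{s+r-s'-r'-4}e^{\xi(\boldsymbol t-\boldsymbol t',z)}\tau(s'+1,r'+1,\boldsymbol t'+[z^{-1}],\bar{\boldsymbol t}')\tau(s-1,r-1,\boldsymbol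 t-[z^{-1}],\bar{\boldsymbol t})$$ $$=\oint\frac{dz}{2\pi i}z^{s'-r'-s+r}e^{\xi(\bar{\boldsymbol t}'-\bar{\boldsymbol t},z^{-1})}\tau(s'+1,r',\boldsymbol t',\bar{\boldsymbol t}'-[z])\tau(s-1,r,\boldsymbol t,\bar{\boldsymbol t}+[z])+\oint\frac{dz}{2\pi i}z^{s-r-s'+r'}e^{\xi(\bar{\boldsymbol t}-\bar{\boldsymbol t}',z^{-1})}\tau(s',r'+1,\boldsymbol t',\bar{\boldsymbol t}'+[z])\tau(s,r-1,\boldsymbol t,\bar{\boldsymbol t}-[z]),$$ where the two left-hand integrands are expanded at $z=\infty$ and the two right-hand ones at $z=0$. Abbreviate $\tau(s,r)=\tau(s,r,\boldsymbol t,\bar{\boldsymbol t})$. Hirota's bilinear derivative: $D_xf\cdot g=(\partial_xf)g-f\,\partial_xg$, and $D_xD_yf\cdot g=\partial_u\partial_v\big(f(x+u,y+v)g(x-u,y-v)\big)|_{u=v=0}$. *)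

theory Defs
  imports Complex_Main "HOL-Library.Poly_Mapping"
begin

text \<open>
  A function of the times (t, tbar) is represented by its formal
  power series: the coefficient of the monomial t^a tbar^b, where a, b are finitely
  supported exponent vectors.  The variable with index i (i = 0,1,2,...) is t_(i+1)
  (resp. tbar_(i+1)); so index 0 is t_1.
\<close>

type_synonym mono = "nat \<Rightarrow>\<^sub>0 nat"
type_synonym fser = "mono \<Rightarrow> mono \<Rightarrow> complex"

definition wt :: "mono \<Rightarrow> nat" where
  "wt e = (\<Sum>i\<in>Poly_Mapping.keys e. (i + 1) * Poly_Mapping.lookup e i)"

text \<open>coefficient of w^j in F(t + eps [w], tbar), where [w] = (w, w^2/2, w^3/3, ...)\<close>
definition shiftT :: "complex \<Rightarrow> fser \<Rightarrow> nat \<Rightarrow> fser" where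
  "shiftT eps F j = (\<lambda>a b. \<Sum>e\<in>{e. wt e = j}. F (a + e) b *
      (\<Prod>i\<in>Poly_Mapping.keys e. of_nat ((Poly_Mapping.lookup a i + Poly_Mapping.lookup e i) choose Poly_Mapping.lookup e i)
                     * (eps / of_nat (i + 1)) ^ Poly_Mapping.lookup e i))"

text \<open>coefficient of w^j in F(t, tbar + eps [w])\<close>
definition shiftTb :: "complex \<Rightarrow> fser \<Rightarrow> nat \<Rightarrow> fser" where
  "shiftTb eps F j = (\<lambda>a b. \<Sum>e\<in>{e. wt e = j}. F a (b + e) *
      (\<Prod>i\<in>Poly_Mapping.keys e. of_nat ((Poly_Mapping.lookup b i + Poly_Mapping.lookup e i) choose Poly_Mapping.lookup e i)
                     * (eps / of_nat (i + 1)) ^ Poly_Mapping.lookup e i))"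

text \<open>coefficient of x'^c' x^c in the Schur polynomial p_k(sigma (x' - x)),
  i.e. in the coefficient of z^k of exp(xi(sigma (x' - x), z)); here k = wt c' + wt c\<close>
definition schur :: "complex \<Rightarrow> mono \<Rightarrow> mono \<Rightarrow> complex" where
  "schur sigma c' c =
     (\<Prod>i\<in>Poly_Mapping.keys c'. sigma ^ Poly_Mapping.lookup c' i / fact (Poly_Mapping.lookup c' i)) *
     (\<Prod>i\<in>Poly_Mapping.keys c. (- sigma) ^ Poly_Mapping.lookup c i / fact (Poly_Mapping.lookup c i))"

definition pairsum :: "int \<Rightarrow> (nat \<Rightarrow> nat \<Rightarrow> complex) \<Rightarrow> complex" where
  "pairsum n g = (if n < 0 then 0 else (\<Sum>j\<le>nat n. g j (nat n - j)))"

text \<open>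
  Coefficient of t'^a' tbar'^b' t^a tbar^b in
    Res_z  z^m exp(xi(sigma (t' - t), z)) F'(t' + eps' [z^-1], tbar') F(t + eps [z^-1], tbar)
  (expansion at z = infinity), where d = m + 1: the residue picks k - j - l = -d
  with k the z-degree of the exponential and j, l the z^-1-degrees of the tau factors.
\<close>
definition resT :: "complex \<Rightarrow> int \<Rightarrow> fser \<Rightarrow> complex \<Rightarrow> fser \<Rightarrow> complex
                    \<Rightarrow> mono \<Rightarrow> mono \<Rightarrow> mono \<Rightarrow> mono \<Rightarrow> complex" where
  "resT sigma d F' eps' F eps a' b' a b =
     (\<Sum>(c', a0')\<in>{p. fst p + snd p = a'}. \<Sum>(c, a0)\<in>{p. fst p + snd p = a}.
        schur sigma c' c *
        pairsum (int (wt c' + wt c) + d)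
          (\<lambda>j l. shiftT eps' F' j a0' b' * shiftT eps F l a0 b))"

text \<open>
  Coefficient of t'^a' tbar'^b' t^a tbar^b in
    Res_z  z^m exp(xi(sigma (tbar' - tbar), z^-1)) F'(t', tbar' + eps' [z]) F(t, tbar + eps [z])
  (expansion at z = 0), where d = - m - 1: the residue picks j + l - k = d.
\<close>
definition resTb :: "complex \<Rightarrow> int \<Rightarrow> fser \<Rightarrow> complex \<Rightarrow> fser \<Rightarrow> complex
                    \<Rightarrow> mono \<Rightarrow> mono \<Rightarrow> mono \<Rightarrow> mono \<Rightarrow> complex" where
  "resTb sigma d F' eps' F eps a' b' a b =
     (\<Sum>(c', b0')\<in>{p. fst p + snd p = b'}. \<Sum>(c, b0)\<in>{p. fst p + snd p = b}.
        schur sigma c' c *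
        pairsum (int (wt c' + wt c) + d)
          (\<lambda>j l. shiftTb eps' F' j a' b0' * shiftTb eps F l a b0))"

text \<open>Tau function of the Pfaff--Toda hierarchy (formal version): nonvanishing, and
  the bilinear identity holds as an identity of formal power series in
  t', tbar', t, tbar, for all integers s, r, s', r'.\<close>
definition pfaff_toda_tau :: "(int \<Rightarrow> int \<Rightarrow> fser) \<Rightarrow> bool" where
  "pfaff_toda_tau tau \<longleftrightarrow>
     (\<forall>s r. tau s r 0 0 \<noteq> 0) \<and>
     (\<forall>s r s' r' a' b' a b.
        resT 1 ((s' + r' - s - r) + 1) (tau s' r') (-1) (tau s r) 1 a' b' a b
      + resT (-1) ((s + r - s' - r' - 4) + 1) (tau (s' + 1) (r' + 1)) 1 (tau (s - 1) (r - 1)) (-1) a' b' a b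
      = resTb 1 (- (s' - r' - s + r) - 1) (tau (s' + 1) r') (-1) (tau (s - 1) r) 1 a' b' a b
      + resTb (-1) (- (s - r - s' + r') - 1) (tau s' (r' + 1)) 1 (tau s (r - 1)) (-1) a' b' a b)"

definition fmul :: "fser \<Rightarrow> fser \<Rightarrow> fser" where
  "fmul F G = (\<lambda>a b. \<Sum>(a1, a2)\<in>{p. fst p + snd p = a}. \<Sum>(b1, b2)\<in>{q. fst q + snd q = b}.
                  F a1 b1 * G a2 b2)"

definition dT :: "fser \<Rightarrow> fser" where
  "dT F = (\<lambda>a b. of_nat (Poly_Mapping.lookup a 0 + 1) * F (a + Poly_Mapping.single 0 1) b)"

definition dTb :: "fser \<Rightarrow> fser" where
  "dTb F = (\<lambda>a b. of_nat (Poly_Mapping.lookup b 0 + 1) * F a (b + Poly_Mapping.single 0 1))"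

definition hirotaT :: "fser \<Rightarrow> fser \<Rightarrow> fser" where
  "hirotaT F G = (\<lambda>a b. fmul (dT F) G a b - fmul F (dT G) a b)"

definition hirotaTb :: "fser \<Rightarrow> fser \<Rightarrow> fser" where
  "hirotaTb F G = (\<lambda>a b. fmul (dTb F) G a b - fmul F (dTb G) a b)"

definition hirotaTTb :: "fser \<Rightarrow> fser \<Rightarrow> fser" where
  "hirotaTTb F G = (\<lambda>a b. fmul (dT (dTb F)) G a b - fmul (dT F) (dTb G) a b
                        - fmul (dTb F) (dT G) a b + fmul F (dT (dTb G)) a b)"

end

theory Submission
  imports Defs "HOL-Library.FuncSet"
begin


abbreviation S :: "mono \<Rightarrow> (mono \<times> mono) set" where
  "S A \<equiv> {p. fst p + snd p = A}"

definition dd :: mono where "dd = Poly_Mapping.single 0 1"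

lemma lookup_dd: "Poly_Mapping.lookup dd i = (if i = 0 then 1 else 0)"
  by (simp add: dd_def lookup_single)

lemma keys_dd: "Poly_Mapping.keys dd = {0}"
  by (simp add: dd_def)

lemma le_of_split: "x + y = (A::mono) \<Longrightarrow> Poly_Mapping.lookup x i \<le> Poly_Mapping.lookup A i"
  by (auto simp: lookup_add)

lemma finite_below: "finite {x::mono. \<forall>i. Poly_Mapping.lookup x i \<le> Poly_Mapping.lookup A i}"
proof -
  define M where "M = Max (Poly_Mapping.lookup A ` Poly_Mapping.keys A)"
  let ?M = "{f. \<forall>i. (i \<in> Poly_Mapping.keys A \<longrightarrow> f i \<in> {0..M}) \<and> (i \<notin> Poly_Mapping.keys A \<longrightarrow> f i = 0)}"
  have fin: "finite ?M"
    by (rule finite_set_of_finite_funs) simp_all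
  have mem: "Poly_Mapping.lookup x \<in> ?M" if h: "\<forall>i. Poly_Mapping.lookup x i \<le> Poly_Mapping.lookup A i" for x :: mono
  proof -
    have "Poly_Mapping.lookup x i \<in> {0..M}" if "i \<in> Poly_Mapping.keys A" for i
    proof -
      have "Poly_Mapping.lookup A i \<le> M"
        unfolding M_def by (rule Max_ge) (simp_all add: that)
      then show ?thesis using h[rule_format, of i] by simp
    qed
    moreover have "Poly_Mapping.lookup x i = 0" if "i \<notin> Poly_Mapping.keys A" for i
      using h[rule_format, of i] that by (simp add: in_keys_iff)
    ultimately show ?thesis by simp
  qed
  have sub: "Poly_Mapping.lookup ` {x::mono. \<forall>i. Poly_Mapping.lookup x i \<le> Poly_Mapping.lookup A i} \<subseteq> ?M"
  proof (rule image_subsetI)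
    fix x :: mono assume "x \<in> {x::mono. \<forall>i. Poly_Mapping.lookup x i \<le> Poly_Mapping.lookup A i}"
    then show "Poly_Mapping.lookup x \<in> ?M" by (intro mem) simp
  qed
  have inj: "inj_on Poly_Mapping.lookup {x::mono. \<forall>i. Poly_Mapping.lookup x i \<le> Poly_Mapping.lookup A i}"
    by (rule inj_onI) (rule poly_mapping_eqI, simp)
  show ?thesis
    by (rule finite_imageD[OF finite_subset[OF sub fin] inj])
qed

lemma finite_S: "finite (S A)"
proof -
  have "S A \<subseteq> (\<lambda>x. (x, A - x)) ` {x::mono. \<forall>i. Poly_Mapping.lookup x i \<le> Poly_Mapping.lookup A i}"
  proof
    fix p assume "p \<in> S A"
    then have "fst p + snd p = A" by simp
    then have "A - fst p = snd p" by (simp flip: \<open>fst p + snd p = A\<close>)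
    then have "p = (fst p, A - fst p)" by simp
    moreover have "fst p \<in> {x::mono. \<forall>i. Poly_Mapping.lookup x i \<le> Poly_Mapping.lookup A i}"
      using \<open>fst p + snd p = A\<close> le_of_split by blast
    ultimately show "p \<in> (\<lambda>x. (x, A - x)) ` {x::mono. \<forall>i. Poly_Mapping.lookup x i \<le> Poly_Mapping.lookup A i}"
      by (rule image_eqI)
  qed
  then show ?thesis using finite_imageI[OF finite_below] by (rule finite_subset)
qed

definition T4 :: "mono \<Rightarrow> (mono \<times> mono \<times> mono \<times> mono) set" where
  "T4 A = {(u,v,w,z). u + v + w + z = A}"

lemma sum_S3:
  "(\<Sum>(x,y)\<in>S A. \<Sum>(u,v)\<in>S x. \<Sum>(w,z)\<in>S y. f u v w z)
   = (\<Sum>(u,v,w,z)\<in>T4 A. f u v w z)"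
proof -
  have "(\<Sum>(x,y)\<in>S A. \<Sum>(u,v)\<in>S x. \<Sum>(w,z)\<in>S y. f u v w z)
      = (\<Sum>p\<in>S A. \<Sum>q\<in>S (fst p) \<times> S (snd p). f (fst (fst q)) (snd (fst q)) (fst (snd q)) (snd (snd q)))"
    by (auto simp: case_prod_beta sum.cartesian_product intro!: sum.cong)
  also have "\<dots> = (\<Sum>pq\<in>Sigma (S A) (\<lambda>p. S (fst p) \<times> S (snd p)).
      f (fst (fst (snd pq))) (snd (fst (snd pq))) (fst (snd (snd pq))) (snd (snd (snd pq))))"
    by (subst sum.Sigma) (auto simp: finite_S case_prod_beta)
  also have "\<dots> = (\<Sum>(u,v,w,z)\<in>T4 A. f u v w z)"
    by (rule sum.reindex_bij_witness[where i="\<lambda>(u,v,w,z). ((u+v, w+z), ((u,v),(w,z)))"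
          and j="\<lambda>pq. (fst (fst (snd pq)), snd (fst (snd pq)), fst (snd (snd pq)), snd (snd (snd pq)))"])
       (auto simp: T4_def add.assoc)
  finally show ?thesis .
qed

lemma T4_swap: "(\<Sum>(u,v,w,z)\<in>T4 A. f u v w z) = (\<Sum>(u,v,w,z)\<in>T4 A. f u w v z)"
  by (rule sum.reindex_bij_witness[where i="\<lambda>(u,v,w,z). (u,w,v,z)" and j="\<lambda>(u,v,w,z). (u,w,v,z)"])
     (auto simp: T4_def ac_simps)

lemma sum_S3_swap:
  "(\<Sum>(x,y)\<in>S A. \<Sum>(u,v)\<in>S x. \<Sum>(w,z)\<in>S y. f u v w z)
   = (\<Sum>(x,y)\<in>S A. \<Sum>(u,w)\<in>S x. \<Sum>(v,z)\<in>S y. f u v w z)"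
  unfolding sum_S3 by (rule T4_swap)

lemma collapse:
  fixes G :: "mono \<Rightarrow> mono \<Rightarrow> complex"
  shows "(\<Sum>(x,y)\<in>S A. \<Sum>(u,w)\<in>S x. \<Sum>(v,z)\<in>S y. G u v * H (u+v) w z)
   = (\<Sum>(x,y)\<in>S A. (\<Sum>(u,v)\<in>S x. G u v) * (\<Sum>(w,z)\<in>S y. H x w z))"
proof -
  have "(\<Sum>(x,y)\<in>S A. \<Sum>(u,w)\<in>S x. \<Sum>(v,z)\<in>S y. G u v * H (u+v) w z)
     = (\<Sum>(x,y)\<in>S A. \<Sum>(u,v)\<in>S x. \<Sum>(w,z)\<in>S y. G u v * H (u+v) w z)"
    by (rule sum_S3_swap[symmetric])
  also have "\<dots> = (\<Sum>(x,y)\<in>S A. (\<Sum>(u,v)\<in>S x. G u v) * (\<Sum>(w,z)\<in>S y. H x w z))"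
    by (auto intro!: sum.cong simp: case_prod_beta) (rule sum_product[symmetric])
  finally show ?thesis .
qed

lemma wt_sum: "finite K \<Longrightarrow> Poly_Mapping.keys e \<subseteq> K \<Longrightarrow>
   wt e = (\<Sum>i\<in>K. (i+1) * Poly_Mapping.lookup e i)"
  unfolding wt_def by (rule sum.mono_neutral_left) (auto simp: in_keys_iff)

lemma wt_add: "wt (a + b) = wt a + wt b"
proof -
  have f: "finite (Poly_Mapping.keys a \<union> Poly_Mapping.keys b)" by simp
  have "wt (a+b) = (\<Sum>i\<in>Poly_Mapping.keys a \<union> Poly_Mapping.keys b. (i+1) * Poly_Mapping.lookup (a+b) i)"
    by (rule wt_sum[OF f]) (rule keys_add)
  also have "\<dots> = wt a + wt b"
    by (simp add: wt_sum[OF f, of a] wt_sum[OF f, of b] lookup_add distrib_left sum.distrib)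
  finally show ?thesis .
qed

lemma wt_0[simp]: "wt 0 = 0" by (simp add: wt_def)

lemma wt_dd[simp]: "wt dd = 1" by (simp add: wt_def keys_dd lookup_dd)

lemma wt_eq_0: "wt e = 0 \<longleftrightarrow> e = 0"
proof
  assume "wt e = 0"
  then have "\<forall>i\<in>Poly_Mapping.keys e. (i+1) * Poly_Mapping.lookup e i = 0"
    unfolding wt_def by simp
  then have "\<And>i. Poly_Mapping.lookup e i = 0" by (auto simp: in_keys_iff)
  then show "e = 0" by (intro poly_mapping_eqI) simp
qed simp

lemma wt_eq_1: "wt e = 1 \<longleftrightarrow> e = dd"
proof
  assume h: "wt e = 1"
  have le: "(i+1) * Poly_Mapping.lookup e i \<le> 1" if "i \<in> Poly_Mapping.keys e" for i
    using member_le_sum[of i "Poly_Mapping.keys e" "\<lambda>i. (i+1) * Poly_Mapping.lookup e i"] that h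
    unfolding wt_def by simp
  have "Poly_Mapping.lookup e i = Poly_Mapping.lookup dd i" for i
  proof (cases "i \<in> Poly_Mapping.keys e")
    case True
    then have l1: "1 \<le> Poly_Mapping.lookup e i" by (simp add: in_keys_iff)
    then have "(i+1) * 1 \<le> (i+1) * Poly_Mapping.lookup e i" by (rule mult_le_mono2)
    with le[OF True] have i0: "i = 0" by simp
    with le[OF True] l1 have "Poly_Mapping.lookup e i = 1" by simp
    with i0 show ?thesis by (simp add: lookup_dd)
  next
    case False
    then have z: "Poly_Mapping.lookup e i = 0" by (simp add: in_keys_iff)
    show ?thesis
    proof (cases "i = 0")
      case True
      have "Poly_Mapping.keys e \<subseteq> {0}"
      proof
        fix k assume k: "k \<in> Poly_Mapping.keys e"
        then have "1 \<le> Poly_Mapping.lookup e k" by (simp add: in_keys_iff)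
        then have "(k+1) * 1 \<le> (k+1) * Poly_Mapping.lookup e k" by (rule mult_le_mono2)
        with le[OF k] show "k \<in> {0}" by simp
      qed
      with False True have "Poly_Mapping.keys e = {}" by blast
      then have "\<And>i. Poly_Mapping.lookup e i = 0" by (auto simp: in_keys_iff)
      then have "e = 0" by (intro poly_mapping_eqI) simp
      with h show ?thesis by simp
    qed (simp add: z lookup_dd)
  qed
  then show "e = dd" by (rule poly_mapping_eqI)
qed simp

lemma wt0_set: "{e. wt e = 0} = {0}" by (auto simp: wt_eq_0)
lemma wt1_set: "{e. wt e = 1} = {dd}" unfolding wt_eq_1 by simp

lemma shiftT_0[simp]: "shiftT eps F 0 = F"
  by (simp add: shiftT_def wt0_set)
lemma shiftTb_0[simp]: "shiftTb eps F 0 = F"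
  by (simp add: shiftTb_def wt0_set)

lemma shiftT_1: "shiftT eps F 1 a b = eps * dT F a b"
  unfolding shiftT_def wt1_set by (simp add: dT_def keys_dd lookup_dd dd_def)
lemma shiftTb_1: "shiftTb eps F 1 a b = eps * dTb F a b"
  unfolding shiftTb_def wt1_set by (simp add: dTb_def keys_dd lookup_dd dd_def)

lemma pairsum_neg: "n < 0 \<Longrightarrow> pairsum n g = 0" by (simp add: pairsum_def)
lemma pairsum_0: "pairsum 0 g = g 0 0" by (simp add: pairsum_def)
lemma pairsum_1: "pairsum 1 g = g 0 1 + g 1 0" by (simp add: pairsum_def)




definition mk :: "nat set \<Rightarrow> (nat \<Rightarrow> nat) \<Rightarrow> mono" where
  "mk K g = Abs_poly_mapping (\<lambda>i. if i \<in> K then g i else 0)"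

lemma lookup_mk: "finite K \<Longrightarrow> Poly_Mapping.lookup (mk K g) i = (if i \<in> K then g i else 0)"
  unfolding mk_def by (subst lookup_Abs_poly_mapping) (auto intro: finite_subset[of _ K])

lemma split_PiE:
  fixes \<phi> :: "nat \<Rightarrow> nat \<Rightarrow> nat \<Rightarrow> complex"
  shows "(\<Sum>(c',c)\<in>S C. \<Prod>i\<in>Poly_Mapping.keys C. \<phi> i (Poly_Mapping.lookup c' i) (Poly_Mapping.lookup c i))
   = (\<Prod>i\<in>Poly_Mapping.keys C. \<Sum>m\<in>{0..Poly_Mapping.lookup C i}. \<phi> i m (Poly_Mapping.lookup C i - m))"
proof -
  let ?K = "Poly_Mapping.keys C"
  let ?B = "\<lambda>i. {0..Poly_Mapping.lookup C i}"
  have fK: "finite ?K" by simp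
  have "(\<Prod>i\<in>?K. \<Sum>m\<in>?B i. \<phi> i m (Poly_Mapping.lookup C i - m))
      = (\<Sum>g\<in>PiE ?K ?B. \<Prod>i\<in>?K. \<phi> i (g i) (Poly_Mapping.lookup C i - g i))"
    by (rule prod_sum_PiE) auto
  also have "\<dots> = (\<Sum>(c',c)\<in>S C. \<Prod>i\<in>?K. \<phi> i (Poly_Mapping.lookup c' i) (Poly_Mapping.lookup c i))"
  proof (rule sum.reindex_bij_witness[where i="\<lambda>p. restrict (Poly_Mapping.lookup (fst p)) ?K"
        and j="\<lambda>g. (mk ?K g, C - mk ?K g)"])
    fix g assume g: "g \<in> PiE ?K ?B"
    show "restrict (Poly_Mapping.lookup (fst (mk ?K g, C - mk ?K g))) ?K = g"
      using g by (auto simp: lookup_mk fun_eq_iff PiE_def extensional_def)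
    show "(mk ?K g, C - mk ?K g) \<in> S C"
      using g by (auto intro!: poly_mapping_eqI simp: lookup_mk lookup_add lookup_minus in_keys_iff PiE_def Pi_def)
    show "(case (mk ?K g, C - mk ?K g) of (c', c) \<Rightarrow> \<Prod>i\<in>?K. \<phi> i (Poly_Mapping.lookup c' i) (Poly_Mapping.lookup c i)) =
          (\<Prod>i\<in>?K. \<phi> i (g i) (Poly_Mapping.lookup C i - g i))"
      by (auto intro!: prod.cong simp: lookup_mk lookup_minus)
  next
    fix p assume p: "p \<in> S C"
    then have pc: "fst p + snd p = C" by simp
    have sub: "Poly_Mapping.keys (fst p) \<subseteq> ?K"
      using pc by (auto simp: in_keys_iff lookup_add)
    have e1: "mk ?K (restrict (Poly_Mapping.lookup (fst p)) ?K) = fst p"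
      using sub by (auto intro!: poly_mapping_eqI simp: lookup_mk in_keys_iff)
    show "(mk ?K (restrict (Poly_Mapping.lookup (fst p)) ?K), C - mk ?K (restrict (Poly_Mapping.lookup (fst p)) ?K)) = p"
      unfolding e1 using pc by (metis add_diff_cancel_left' prod.collapse)
    show "restrict (Poly_Mapping.lookup (fst p)) ?K \<in> PiE ?K ?B"
      using pc by (auto simp: lookup_add)
  qed
  finally show ?thesis by simp
qed

lemma binom0:
  fixes \<sigma> :: complex
  shows "(\<Sum>m\<in>{0..N}. \<sigma>^m / fact m * ((-\<sigma>)^(N-m) / fact (N-m))) = (if N = 0 then 1 else 0)"
proof -
  have "(\<sigma> + -\<sigma>)^N = (\<Sum>m\<le>N. of_nat (N choose m) * \<sigma>^m * (-\<sigma>)^(N-m))"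
    by (rule binomial_ring)
  also have "\<dots> = (\<Sum>m\<in>{0..N}. fact N * (\<sigma>^m / fact m * ((-\<sigma>)^(N-m) / fact (N-m))))"
    by (auto intro!: sum.cong simp: binomial_fact atMost_atLeast0)
  also have "\<dots> = fact N * (\<Sum>m\<in>{0..N}. \<sigma>^m / fact m * ((-\<sigma>)^(N-m) / fact (N-m)))"
    by (simp add: sum_distrib_left)
  finally have "(\<Sum>m\<in>{0..N}. \<sigma>^m / fact m * ((-\<sigma>)^(N-m) / fact (N-m))) = 0^N / fact N"
    by (simp add: field_simps)
  then show ?thesis by simp
qed

lemma binom1:
  fixes \<sigma> :: complex
  shows "(\<Sum>m\<in>{0..N}. of_nat m * (\<sigma>^m / fact m * ((-\<sigma>)^(N-m) / fact (N-m)))) = (if N = 1 then \<sigma> else 0)"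
proof (cases N)
  case 0 then show ?thesis by simp
next
  case (Suc M)
  have "(\<Sum>m\<in>{0..N}. of_nat m * (\<sigma>^m / fact m * ((-\<sigma>)^(N-m) / fact (N-m))))
      = (\<Sum>k\<in>{0..M}. of_nat (Suc k) * (\<sigma>^(Suc k) / fact (Suc k) * ((-\<sigma>)^(M-k) / fact (M-k))))"
    unfolding Suc by (subst sum.atLeast0_atMost_Suc_shift) simp
  also have "\<dots> = \<sigma> * (\<Sum>k\<in>{0..M}. \<sigma>^k / fact k * ((-\<sigma>)^(M-k) / fact (M-k)))"
    unfolding sum_distrib_left
  proof (rule sum.cong[OF refl])
    fix k
    have "fact (Suc k) = (of_nat (Suc k) :: complex) * fact k" by (simp add: fact_Suc)
    then show "of_nat (Suc k) * (\<sigma>^(Suc k) / fact (Suc k) * ((-\<sigma>)^(M-k) / fact (M-k)))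
        = \<sigma> * (\<sigma>^k / fact k * ((-\<sigma>)^(M-k) / fact (M-k)))"
      by (simp add: field_simps del: of_nat_Suc)
  qed
  also have "\<dots> = \<sigma> * (if M = 0 then 1 else 0)"
    by (simp only: binom0)
  finally show ?thesis by (simp add: Suc)
qed

lemma schur_prod:
  assumes "c' + c = C"
  shows "schur \<sigma> c' c = (\<Prod>i\<in>Poly_Mapping.keys C.
      \<sigma>^(Poly_Mapping.lookup c' i) / fact (Poly_Mapping.lookup c' i) *
      ((-\<sigma>)^(Poly_Mapping.lookup c i) / fact (Poly_Mapping.lookup c i)))"
proof -
  have s1: "Poly_Mapping.keys c' \<subseteq> Poly_Mapping.keys C" "Poly_Mapping.keys c \<subseteq> Poly_Mapping.keys C"
    using assms by (auto simp: in_keys_iff lookup_add)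
  show ?thesis
    unfolding schur_def prod.distrib
    by (subst prod.mono_neutral_left[OF _ s1(1)], simp, simp add: in_keys_iff)
       (subst prod.mono_neutral_left[OF _ s1(2)], simp, simp add: in_keys_iff, simp)
qed

lemma SC0: "(\<Sum>(c',c)\<in>S C. schur \<sigma> c' c) = (if C = 0 then 1 else 0)"
proof -
  have "(\<Sum>(c',c)\<in>S C. schur \<sigma> c' c) = (\<Sum>(c',c)\<in>S C. \<Prod>i\<in>Poly_Mapping.keys C.
      \<sigma>^(Poly_Mapping.lookup c' i) / fact (Poly_Mapping.lookup c' i) *
      ((-\<sigma>)^(Poly_Mapping.lookup c i) / fact (Poly_Mapping.lookup c i)))"
    by (rule sum.cong[OF refl]) (auto simp: schur_prod)
  also have "\<dots> = (\<Prod>i\<in>Poly_Mapping.keys C. (if Poly_Mapping.lookup C i = 0 then 1 else 0))"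
    by (subst split_PiE, rule prod.cong[OF refl], rule binom0)
  also have "\<dots> = (if C = 0 then 1 else 0)"
  proof (cases "C = 0")
    case False
    then obtain i where "i \<in> Poly_Mapping.keys C"
      by (metis all_not_in_conv keys_eq_empty)
    then show ?thesis using False by (intro trans[OF prod_zero]) (auto simp: in_keys_iff)
  qed simp
  finally show ?thesis .
qed

lemma SC1_term:
  assumes "c' + c = C" "0 \<in> Poly_Mapping.keys C"
  shows "of_nat (Poly_Mapping.lookup c' 0) * schur \<sigma> c' c =
    (\<Prod>i\<in>Poly_Mapping.keys C. (if i = 0 then of_nat (Poly_Mapping.lookup c' i) else 1) *
      (\<sigma>^(Poly_Mapping.lookup c' i) / fact (Poly_Mapping.lookup c' i) *
      ((-\<sigma>)^(Poly_Mapping.lookup c i) / fact (Poly_Mapping.lookup c i))))"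
  using assms by (simp only: schur_prod[OF assms(1)] prod.distrib) (simp add: prod.delta)

lemma SC1: "(\<Sum>(c',c)\<in>S C. of_nat (Poly_Mapping.lookup c' 0) * schur \<sigma> c' c) = (if C = dd then \<sigma> else 0)"
proof (cases "0 \<in> Poly_Mapping.keys C")
  case False
  then have "Poly_Mapping.lookup C 0 = 0" by (simp add: in_keys_iff)
  then have z: "\<And>p. p \<in> S C \<Longrightarrow> Poly_Mapping.lookup (fst p) 0 = 0"
    by (auto simp: lookup_add)
  have "C \<noteq> dd" using False by (auto simp: keys_dd)
  have "\<forall>p\<in>S C. (case p of (c',c) \<Rightarrow> of_nat (Poly_Mapping.lookup c' 0) * schur \<sigma> c' c) = 0"
    using z by (auto simp: case_prod_beta)
  then show ?thesis using \<open>C \<noteq> dd\<close> by (simp add: sum.neutral)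
next
  case True
  let ?K = "Poly_Mapping.keys C"
  let ?\<phi> = "\<lambda>i m n. (if i = 0 then of_nat m else 1) * (\<sigma>^m / fact m * ((-\<sigma>)^n / fact n))"
  have "(\<Sum>(c',c)\<in>S C. of_nat (Poly_Mapping.lookup c' 0) * schur \<sigma> c' c)
     = (\<Sum>(c',c)\<in>S C. \<Prod>i\<in>?K. ?\<phi> i (Poly_Mapping.lookup c' i) (Poly_Mapping.lookup c i))"
    by (rule sum.cong[OF refl]) (simp only: mem_Collect_eq case_prod_beta SC1_term[OF _ True])
  also have "\<dots> = (\<Prod>i\<in>?K. \<Sum>m\<in>{0..Poly_Mapping.lookup C i}. ?\<phi> i m (Poly_Mapping.lookup C i - m))"
    by (rule split_PiE)
  also have "\<dots> = (\<Prod>i\<in>?K. if i = 0 then (if Poly_Mapping.lookup C 0 = 1 then \<sigma> else 0) else 0)"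
  proof (rule prod.cong[OF refl])
    fix i assume i: "i \<in> ?K"
    show "(\<Sum>m\<in>{0..Poly_Mapping.lookup C i}. ?\<phi> i m (Poly_Mapping.lookup C i - m)) =
      (if i = 0 then (if Poly_Mapping.lookup C 0 = 1 then \<sigma> else 0) else 0)"
    proof (cases "i = 0")
      case True then show ?thesis using binom1[of \<sigma> "Poly_Mapping.lookup C 0"] by simp
    next
      case False then show ?thesis using i binom0[of \<sigma> "Poly_Mapping.lookup C i"] by (simp add: in_keys_iff)
    qed
  qed
  also have "\<dots> = (if C = dd then \<sigma> else 0)"
  proof (cases "C = dd")
    case True then show ?thesis by (simp add: keys_dd lookup_dd)
  next
    case False
    have "\<exists>i\<in>?K. (if i = 0 then (if Poly_Mapping.lookup C 0 = 1 then \<sigma> else 0) else 0) = 0"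
    proof (rule ccontr)
      assume "\<not> ?thesis"
      then have k: "?K = {0}" and c0: "Poly_Mapping.lookup C 0 = 1"
        using True by (auto split: if_splits)
      have "C = dd"
        by (rule poly_mapping_eqI) (metis c0 k lookup_dd in_keys_iff singletonI singletonD)
      with False show False by simp
    qed
    then show ?thesis using False by (simp add: prod_zero)
  qed
  finally show ?thesis .
qed



lemma swap3: "(\<Sum>p\<in>U. \<Sum>q\<in>X. \<Sum>r\<in>Y. g p q r) = (\<Sum>q\<in>X. \<Sum>r\<in>Y. \<Sum>p\<in>U. g p q r)"
  by (subst sum.swap) (rule sum.cong[OF refl], rule sum.swap)

definition PT :: "complex \<Rightarrow> fser \<Rightarrow> complex \<Rightarrow> fser \<Rightarrow> int \<Rightarrow> mono \<Rightarrow> mono \<Rightarrow> mono \<Rightarrow> complex" where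
  "PT e' F' e F n p q B = (\<Sum>(u,v)\<in>S B. pairsum n (\<lambda>j l. shiftT e' F' j p u * shiftT e F l q v))"

lemma resT_inner:
  "(\<Sum>(u,v)\<in>S B. K * resT \<sigma> d F' e' F e x u y v)
   = (\<Sum>(c',p)\<in>S x. \<Sum>(c,q)\<in>S y. K * schur \<sigma> c' c * PT e' F' e F (int (wt (c'+c)) + d) p q B)"
proof -
  have "(\<Sum>(u,v)\<in>S B. K * resT \<sigma> d F' e' F e x u y v)
    = (\<Sum>uv\<in>S B. \<Sum>cp\<in>S x. \<Sum>cq\<in>S y. K * (schur \<sigma> (fst cp) (fst cq) *
        pairsum (int (wt (fst cp) + wt (fst cq)) + d)
          (\<lambda>j l. shiftT e' F' j (snd cp) (fst uv) * shiftT e F l (snd cq) (snd uv))))"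
    unfolding resT_def by (simp only: case_prod_unfold sum_distrib_left)
  also have "\<dots> = (\<Sum>cp\<in>S x. \<Sum>cq\<in>S y. \<Sum>uv\<in>S B. K * (schur \<sigma> (fst cp) (fst cq) *
        pairsum (int (wt (fst cp) + wt (fst cq)) + d)
          (\<lambda>j l. shiftT e' F' j (snd cp) (fst uv) * shiftT e F l (snd cq) (snd uv))))"
    by (rule swap3)
  also have "\<dots> = (\<Sum>(c',p)\<in>S x. \<Sum>(c,q)\<in>S y. K * schur \<sigma> c' c * PT e' F' e F (int (wt (c'+c)) + d) p q B)"
    unfolding PT_def by (simp only: case_prod_unfold sum_distrib_left wt_add mult.assoc)
  finally show ?thesis .
qed

lemma sum_S_delta:
  fixes f :: "mono \<Rightarrow> complex"
  shows "(\<Sum>(X,Y)\<in>S (A + D). if X = D then f Y else 0) = f A"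
proof -
  have "(\<Sum>(X,Y)\<in>S (A + D). if X = D then f Y else 0) = (\<Sum>p\<in>S (A + D). if p = (D, A) then f (snd p) else 0)"
  proof (rule sum.cong[OF refl])
    fix p assume "p \<in> S (A + D)"
    then have "fst p + snd p = A + D" by simp
    then have "fst p = D \<longleftrightarrow> p = (D, A)"
      by (metis add.commute add_left_imp_eq prod.collapse fst_conv)
    then show "(case p of (X,Y) \<Rightarrow> if X = D then f Y else 0) = (if p = (D, A) then f (snd p) else 0)"
      by (auto simp: case_prod_beta)
  qed
  also have "\<dots> = f A"
    by (subst sum.delta) (auto simp: finite_S add.commute)
  finally show ?thesis .
qed

lemma Dg_T:
  "(\<Sum>(x,y)\<in>S A. \<Sum>(u,v)\<in>S B. resT \<sigma> d F' e' F e x u y v) = (\<Sum>(p,q)\<in>S A. PT e' F' e F d p q B)"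
proof -
  have "(\<Sum>(x,y)\<in>S A. \<Sum>(u,v)\<in>S B. resT \<sigma> d F' e' F e x u y v)
      = (\<Sum>(x,y)\<in>S A. \<Sum>(c',p)\<in>S x. \<Sum>(c,q)\<in>S y. schur \<sigma> c' c * PT e' F' e F (int (wt (c'+c)) + d) p q B)"
    using resT_inner[where K=1] by simp
  also have "\<dots> = (\<Sum>(X,Y)\<in>S A. (\<Sum>(c',c)\<in>S X. schur \<sigma> c' c) * (\<Sum>(p,q)\<in>S Y. PT e' F' e F (int (wt X) + d) p q B))"
    by (rule collapse)
  also have "\<dots> = (\<Sum>(X,Y)\<in>S (A + 0). if X = 0 then (\<Sum>(p,q)\<in>S Y. PT e' F' e F d p q B) else 0)"
    unfolding add_0_right by (rule sum.cong[OF refl]) (auto simp: SC0)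
  also have "\<dots> = (\<Sum>(p,q)\<in>S A. PT e' F' e F d p q B)"
    by (rule sum_S_delta)
  finally show ?thesis .
qed

lemma PT_neg: "n < 0 \<Longrightarrow> PT e' F' e F n p q B = 0"
  by (simp add: PT_def pairsum_neg)

lemma PT_0: "PT e' F' e F 0 p q B = (\<Sum>(u,v)\<in>S B. F' p u * F q v)"
  by (simp add: PT_def pairsum_0)

lemma Wt_T_inner:
  "(\<Sum>(u,v)\<in>S B. of_nat (Poly_Mapping.lookup x 0) * resT \<sigma> d F' e' F e x u y v)
   = (\<Sum>(c',p)\<in>S x. \<Sum>(c,q)\<in>S y. of_nat (Poly_Mapping.lookup c' 0) * schur \<sigma> c' c * PT e' F' e F (int (wt (c'+c)) + d) p q B
        + schur \<sigma> c' c * (of_nat (Poly_Mapping.lookup p 0) * PT e' F' e F (int (wt (c'+c)) + d) p q B))"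
  unfolding resT_inner
  by (rule sum.cong[OF refl], clarify, rule sum.cong[OF refl], clarify)
     (simp add: lookup_add algebra_simps)

lemma Wt_T:
  "(\<Sum>(x,y)\<in>S (A+dd). \<Sum>(u,v)\<in>S B. of_nat (Poly_Mapping.lookup x 0) * resT \<sigma> (-1) F' e' F e x u y v)
   = \<sigma> * fmul F' F A B"
proof -
  define H1 where "H1 = (\<lambda>C p q. PT e' F' e F (int (wt C) + -1) p q B)"
  define H2 where "H2 = (\<lambda>C p q. of_nat (Poly_Mapping.lookup p 0) * PT e' F' e F (int (wt C) + -1) p q B)"
  define G1 where "G1 = (\<lambda>c' c. of_nat (Poly_Mapping.lookup c' 0) * schur \<sigma> c' c)"
  have "(\<Sum>(x,y)\<in>S (A+dd). \<Sum>(u,v)\<in>S B. of_nat (Poly_Mapping.lookup x 0) * resT \<sigma> (-1) F' e' F e x u y v)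
      = (\<Sum>(x,y)\<in>S (A+dd). \<Sum>(c',p)\<in>S x. \<Sum>(c,q)\<in>S y. G1 c' c * H1 (c'+c) p q + schur \<sigma> c' c * H2 (c'+c) p q)"
    unfolding G1_def H1_def H2_def by (simp only: Wt_T_inner)
  also have "\<dots> = (\<Sum>(x,y)\<in>S (A+dd). \<Sum>(c',p)\<in>S x. \<Sum>(c,q)\<in>S y. G1 c' c * H1 (c'+c) p q)
                  + (\<Sum>(x,y)\<in>S (A+dd). \<Sum>(c',p)\<in>S x. \<Sum>(c,q)\<in>S y. schur \<sigma> c' c * H2 (c'+c) p q)"
    by (simp only: case_prod_unfold sum.distrib)
  also have "\<dots> = (\<Sum>(X,Y)\<in>S (A+dd). (\<Sum>(c',c)\<in>S X. G1 c' c) * (\<Sum>(p,q)\<in>S Y. H1 X p q))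
                  + (\<Sum>(X,Y)\<in>S (A+dd). (\<Sum>(c',c)\<in>S X. schur \<sigma> c' c) * (\<Sum>(p,q)\<in>S Y. H2 X p q))"
    by (simp only: collapse)
  also have "(\<Sum>(X,Y)\<in>S (A+dd). (\<Sum>(c',c)\<in>S X. schur \<sigma> c' c) * (\<Sum>(p,q)\<in>S Y. H2 X p q)) = 0"
    by (rule sum.neutral) (auto simp: SC0 H2_def PT_neg)
  also have "(\<Sum>(X,Y)\<in>S (A+dd). (\<Sum>(c',c)\<in>S X. G1 c' c) * (\<Sum>(p,q)\<in>S Y. H1 X p q))
     = (\<Sum>(X,Y)\<in>S (A+dd). if X = dd then \<sigma> * (\<Sum>(p,q)\<in>S Y. PT e' F' e F 0 p q B) else 0)"
    by (rule sum.cong[OF refl]) (auto simp: G1_def SC1 H1_def)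
  also have "\<dots> = \<sigma> * (\<Sum>(p,q)\<in>S A. PT e' F' e F 0 p q B)"
    by (rule sum_S_delta)
  also have "\<dots> = \<sigma> * fmul F' F A B"
    by (simp add: PT_0 fmul_def)
  finally show ?thesis by simp
qed

lemma Dg_Tb_inner:
  "(\<Sum>(u,v)\<in>S B. resTb \<sigma> d F' e' F e x u y v)
   = (\<Sum>(w,z)\<in>S B. pairsum d (\<lambda>j l. shiftTb e' F' j x w * shiftTb e F l y z))"
proof -
  have "(\<Sum>(u,v)\<in>S B. resTb \<sigma> d F' e' F e x u y v)
     = (\<Sum>(u,v)\<in>S B. \<Sum>(c',w)\<in>S u. \<Sum>(c,z)\<in>S v. schur \<sigma> c' c *
          pairsum (int (wt (c' + c)) + d) (\<lambda>j l. shiftTb e' F' j x w * shiftTb e F l y z))"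
    unfolding resTb_def wt_add by simp
  also have "\<dots> = (\<Sum>(X,Y)\<in>S B. (\<Sum>(c',c)\<in>S X. schur \<sigma> c' c) *
          (\<Sum>(w,z)\<in>S Y. pairsum (int (wt X) + d) (\<lambda>j l. shiftTb e' F' j x w * shiftTb e F l y z)))"
    by (rule collapse)
  also have "\<dots> = (\<Sum>(X,Y)\<in>S (B + 0). if X = 0 then
          (\<Sum>(w,z)\<in>S Y. pairsum d (\<lambda>j l. shiftTb e' F' j x w * shiftTb e F l y z)) else 0)"
    unfolding add_0_right by (rule sum.cong[OF refl]) (auto simp: SC0)
  also have "\<dots> = (\<Sum>(w,z)\<in>S B. pairsum d (\<lambda>j l. shiftTb e' F' j x w * shiftTb e F l y z))"
    by (rule sum_S_delta)
  finally show ?thesis .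
qed

lemma shiftTb_dT:
  "shiftTb e (dT F) j x b = of_nat (Poly_Mapping.lookup x 0 + 1) * shiftTb e F j (x + dd) b"
  by (simp add: shiftTb_def dT_def sum_distrib_left dd_def mult_ac)

lemma resTb_dT:
  "resTb \<sigma> d (dT F') e' F e x u y v = of_nat (Poly_Mapping.lookup x 0 + 1) * resTb \<sigma> d F' e' F e (x + dd) u y v"
proof -
  have pm: "\<And>c s n g. (c::complex) * (s * pairsum n g) = s * pairsum n (\<lambda>j l. c * g j l)"
    by (simp add: pairsum_def sum_distrib_left mult_ac)
  show ?thesis
    by (simp only: resTb_def shiftTb_dT case_prod_unfold sum_distrib_left pm mult.assoc)
qed

lemma reindex_dd:
  fixes G :: "mono \<Rightarrow> mono \<Rightarrow> complex"
  shows "(\<Sum>(x,y)\<in>S (A+dd). of_nat (Poly_Mapping.lookup x 0) * G x y)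
       = (\<Sum>(x,y)\<in>S A. of_nat (Poly_Mapping.lookup x 0 + 1) * G (x+dd) y)"
proof -
  let ?f = "\<lambda>p::mono\<times>mono. (fst p + dd, snd p)"
  let ?h = "\<lambda>p::mono\<times>mono. of_nat (Poly_Mapping.lookup (fst p) 0) * G (fst p) (snd p)"
  have inj: "inj_on ?f (S A)"
    by (rule inj_onI) (auto simp: prod_eq_iff)
  have "(\<Sum>(x,y)\<in>S A. of_nat (Poly_Mapping.lookup x 0 + 1) * G (x+dd) y) = (\<Sum>p\<in>S A. ?h (?f p))"
    by (rule sum.cong[OF refl]) (auto simp: lookup_add lookup_dd)
  also have "\<dots> = (\<Sum>p\<in>?f ` S A. ?h p)"
    by (simp add: sum.reindex[OF inj])
  also have "\<dots> = (\<Sum>p\<in>S (A+dd). ?h p)"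
  proof (rule sum.mono_neutral_left)
    show "finite (S (A+dd))" by (rule finite_S)
    show "?f ` S A \<subseteq> S (A+dd)" by (auto simp: ac_simps)
    show "\<forall>p\<in>S (A+dd) - ?f ` S A. ?h p = 0"
    proof
      fix p assume p: "p \<in> S (A+dd) - ?f ` S A"
      show "?h p = 0"
      proof (rule ccontr)
        assume "?h p \<noteq> 0"
        then have l: "Poly_Mapping.lookup (fst p) 0 \<noteq> 0" by auto
        have e1: "fst p - dd + dd = fst p"
          using l by (intro poly_mapping_eqI) (simp add: lookup_add lookup_minus lookup_dd)
        have "(fst p - dd + snd p) + dd = (fst p - dd + dd) + snd p" by (simp add: ac_simps)
        also have "\<dots> = fst p + snd p" using e1 by simp
        also have "\<dots> = A + dd" using p by simp
        finally have "(fst p - dd + snd p) + dd = A + dd" .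
        then have "fst p - dd + snd p = A" by simp
        then have "(fst p - dd, snd p) \<in> S A" by simp
        moreover have "p = ?f (fst p - dd, snd p)" using e1 by simp
        ultimately show False using p by blast
      qed
    qed
  qed
  finally show ?thesis by (simp add: case_prod_unfold)
qed

lemma Wt_Tb:
  "(\<Sum>(x,y)\<in>S (A+dd). \<Sum>(u,v)\<in>S B. of_nat (Poly_Mapping.lookup x 0) * resTb \<sigma> d F' e' F e x u y v)
   = (\<Sum>(x,y)\<in>S A. \<Sum>(u,v)\<in>S B. resTb \<sigma> d (dT F') e' F e x u y v)"
proof -
  have "(\<Sum>(x,y)\<in>S (A+dd). \<Sum>(u,v)\<in>S B. of_nat (Poly_Mapping.lookup x 0) * resTb \<sigma> d F' e' F e x u y v)
     = (\<Sum>(x,y)\<in>S (A+dd). of_nat (Poly_Mapping.lookup x 0) * (\<Sum>(u,v)\<in>S B. resTb \<sigma> d F' e' F e x u y v))"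
    by (simp add: sum_distrib_left case_prod_unfold)
  also have "\<dots> = (\<Sum>(x,y)\<in>S A. of_nat (Poly_Mapping.lookup x 0 + 1) * (\<Sum>(u,v)\<in>S B. resTb \<sigma> d F' e' F e (x+dd) u y v))"
    by (rule reindex_dd)
  also have "\<dots> = (\<Sum>(x,y)\<in>S A. \<Sum>(u,v)\<in>S B. resTb \<sigma> d (dT F') e' F e x u y v)"
    by (simp add: resTb_dT sum_distrib_left case_prod_unfold)
  finally show ?thesis .
qed



lemma shiftT_S0: "shiftT eps F (Suc 0) a b = eps * dT F a b"
  using shiftT_1 by simp
lemma shiftTb_S0: "shiftTb eps F (Suc 0) a b = eps * dTb F a b"
  using shiftTb_1 by simp

lemma Dg_T1:
  "(\<Sum>(x,y)\<in>S A. \<Sum>(u,v)\<in>S B. resT \<sigma> 1 F' e' F e x u y v)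
   = e * fmul F' (dT F) A B + e' * fmul (dT F') F A B"
  unfolding Dg_T PT_def fmul_def
  by (simp add: pairsum_1 shiftT_1 shiftT_S0 sum.distrib sum_distrib_left case_prod_unfold mult_ac)

lemma Dg_Tneg:
  "d < 0 \<Longrightarrow> (\<Sum>(x,y)\<in>S A. \<Sum>(u,v)\<in>S B. resT \<sigma> d F' e' F e x u y v) = 0"
  unfolding Dg_T by (simp add: PT_neg)

lemma Dg_Tb1:
  "(\<Sum>(x,y)\<in>S A. \<Sum>(u,v)\<in>S B. resTb \<sigma> 1 F' e' F e x u y v)
   = e * fmul F' (dTb F) A B + e' * fmul (dTb F') F A B"
  unfolding Dg_Tb_inner fmul_def
  by (simp add: pairsum_1 shiftTb_1 shiftTb_S0 sum.distrib sum_distrib_left case_prod_unfold mult_ac)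

lemma Dg_Tbneg:
  "d < 0 \<Longrightarrow> (\<Sum>(x,y)\<in>S A. \<Sum>(u,v)\<in>S B. resTb \<sigma> d F' e' F e x u y v) = 0"
  unfolding Dg_Tb_inner by (simp add: pairsum_neg)

lemma S_swap: "(\<Sum>p\<in>S A. f p) = (\<Sum>p\<in>S A. f (snd p, fst p))"
  by (rule sum.reindex_bij_witness[where i="\<lambda>p. (snd p, fst p)" and j="\<lambda>p. (snd p, fst p)"])
     (auto simp: add.commute)

lemma fmul_comm: "fmul F G a b = fmul G F a b"
  unfolding fmul_def case_prod_unfold
  by (subst S_swap, rule sum.cong[OF refl], subst S_swap) (simp add: mult.commute)

lemma dT_dTb: "dT (dTb F) = dTb (dT F)"
  by (simp add: dT_def dTb_def fun_eq_iff lookup_add mult_ac)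

lemma sum_identity:
  fixes w :: "mono \<Rightarrow> complex"
  assumes "\<And>x u y v. La x u y v + Lb x u y v = Ra x u y v + Rb x u y v"
  shows "(\<Sum>(x,y)\<in>S A. \<Sum>(u,v)\<in>S B. w x * La x u y v) + (\<Sum>(x,y)\<in>S A. \<Sum>(u,v)\<in>S B. w x * Lb x u y v)
       = (\<Sum>(x,y)\<in>S A. \<Sum>(u,v)\<in>S B. w x * Ra x u y v) + (\<Sum>(x,y)\<in>S A. \<Sum>(u,v)\<in>S B. w x * Rb x u y v)"
proof -
  have "(\<Sum>(x,y)\<in>S A. \<Sum>(u,v)\<in>S B. w x * (La x u y v + Lb x u y v))
      = (\<Sum>(x,y)\<in>S A. \<Sum>(u,v)\<in>S B. w x * (Ra x u y v + Rb x u y v))"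
    by (simp only: assms)
  then show ?thesis by (simp add: distrib_left sum.distrib case_prod_unfold)
qed

theorem mainTheorem14:
  assumes "pfaff_toda_tau tau"
  shows "(\<forall>s r a b. hirotaTTb (tau s r) (tau s r) a b / 2
                    + fmul (tau (s - 1) r) (tau (s + 1) r) a b
                    - fmul (tau s (r - 1)) (tau s (r + 1)) a b = 0)
       \<and> (\<forall>s r a b. hirotaT (tau s r) (tau (s + 1) (r - 1)) a b
                    + hirotaTb (tau s (r - 1)) (tau (s + 1) r) a b = 0)"
proof -
  have id: "\<forall>s r s' r' a' b' a b.
        resT 1 ((s' + r' - s - r) + 1) (tau s' r') (-1) (tau s r) 1 a' b' a b
      + resT (-1) ((s + r - s' - r' - 4) + 1) (tau (s' + 1) (r' + 1)) 1 (tau (s - 1) (r - 1)) (-1) a' b' a b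
      = resTb 1 (- (s' - r' - s + r) - 1) (tau (s' + 1) r') (-1) (tau (s - 1) r) 1 a' b' a b
      + resTb (-1) (- (s - r - s' + r') - 1) (tau s' (r' + 1)) 1 (tau s (r - 1)) (-1) a' b' a b"
    using assms unfolding pfaff_toda_tau_def by blast
  show ?thesis
  proof (intro conjI allI)
    fix s r a b
    have H: "\<And>x u y v.
        resT 1 (-1) (tau (s-1) r) (-1) (tau (s+1) r) 1 x u y v
      + resT (-1) (-1) (tau s (r + 1)) 1 (tau s (r - 1)) (-1) x u y v
      = resTb 1 1 (tau s r) (-1) (tau s r) 1 x u y v
      + resTb (-1) (-3) (tau (s-1) (r + 1)) 1 (tau (s+1) (r - 1)) (-1) x u y v"
      using id[rule_format, of "s-1" r "s+1" r] by simp
    have E: "fmul (tau (s-1) r) (tau (s+1) r) a b - fmul (tau s (r + 1)) (tau s (r - 1)) a b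
        = fmul (dT (tau s r)) (dTb (tau s r)) a b - fmul (dTb (dT (tau s r))) (tau s r) a b"
      using sum_identity[where w="\<lambda>x. of_nat (Poly_Mapping.lookup x 0)" and A="a + dd" and B=b
          and La="\<lambda>x u y v. resT 1 (-1) (tau (s-1) r) (-1) (tau (s+1) r) 1 x u y v"
          and Lb="\<lambda>x u y v. resT (-1) (-1) (tau s (r + 1)) 1 (tau s (r - 1)) (-1) x u y v"
          and Ra="\<lambda>x u y v. resTb 1 1 (tau s r) (-1) (tau s r) 1 x u y v"
          and Rb="\<lambda>x u y v. resTb (-1) (-3) (tau (s-1) (r + 1)) 1 (tau (s+1) (r - 1)) (-1) x u y v", OF H]
      by (simp only: Wt_T Wt_Tb Dg_Tb1 Dg_Tbneg) simp
    show "hirotaTTb (tau s r) (tau s r) a b / 2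
                    + fmul (tau (s - 1) r) (tau (s + 1) r) a b
                    - fmul (tau s (r - 1)) (tau s (r + 1)) a b = 0"
    proof -
      let ?t = "tau s r"
      have h2: "hirotaTTb ?t ?t a b = 2 * (fmul (dTb (dT ?t)) ?t a b - fmul (dT ?t) (dTb ?t) a b)"
        unfolding hirotaTTb_def dT_dTb
        by (simp add: fmul_comm[of ?t "dTb (dT ?t)"] fmul_comm[of "dTb ?t" "dT ?t"] algebra_simps)
      have c: "fmul (tau s (r - 1)) (tau s (r + 1)) a b = fmul (tau s (r + 1)) (tau s (r - 1)) a b"
        by (rule fmul_comm)
      have "hirotaTTb ?t ?t a b / 2 + fmul (tau (s - 1) r) (tau (s + 1) r) a b
              - fmul (tau s (r - 1)) (tau s (r + 1)) a b
          = (fmul (dTb (dT ?t)) ?t a b - fmul (dT ?t) (dTb ?t) a b)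
            + (fmul (tau (s-1) r) (tau (s+1) r) a b - fmul (tau s (r + 1)) (tau s (r - 1)) a b)"
        unfolding h2 c by (simp add: field_simps)
      also have "\<dots> = 0" unfolding E by simp
      finally show ?thesis .
    qed
  next
    fix s r a b
    have H: "\<And>x u y v.
        resT 1 1 (tau s r) (-1) (tau (s+1) (r-1)) 1 x u y v
      + resT (-1) (-3) (tau (s+1) (r + 1)) 1 (tau s (r - 2)) (-1) x u y v
      = resTb 1 1 (tau (s+1) r) (-1) (tau s (r-1)) 1 x u y v
      + resTb (-1) (-3) (tau s (r + 1)) 1 (tau (s+1) (r - 2)) (-1) x u y v"
      using id[rule_format, of s r "s+1" "r-1"] by (simp add: algebra_simps)
    have E: "fmul (tau s r) (dT (tau (s+1) (r-1))) a b - fmul (dT (tau s r)) (tau (s+1) (r-1)) a b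
        = fmul (tau (s+1) r) (dTb (tau s (r-1))) a b - fmul (dTb (tau (s+1) r)) (tau s (r-1)) a b"
      using sum_identity[where w="\<lambda>x. 1" and A=a and B=b
          and La="\<lambda>x u y v. resT 1 1 (tau s r) (-1) (tau (s+1) (r-1)) 1 x u y v"
          and Lb="\<lambda>x u y v. resT (-1) (-3) (tau (s+1) (r + 1)) 1 (tau s (r - 2)) (-1) x u y v"
          and Ra="\<lambda>x u y v. resTb 1 1 (tau (s+1) r) (-1) (tau s (r-1)) 1 x u y v"
          and Rb="\<lambda>x u y v. resTb (-1) (-3) (tau s (r + 1)) 1 (tau (s+1) (r - 2)) (-1) x u y v", OF H]
      by (simp only: mult_1 Dg_T1 Dg_Tneg Dg_Tb1 Dg_Tbneg) simp
    show "hirotaT (tau s r) (tau (s + 1) (r - 1)) a b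
                    + hirotaTb (tau s (r - 1)) (tau (s + 1) r) a b = 0"
    proof -
      have c1: "fmul (tau (s+1) r) (dTb (tau s (r-1))) a b = fmul (dTb (tau s (r-1))) (tau (s+1) r) a b"
        by (rule fmul_comm)
      have c2: "fmul (dTb (tau (s+1) r)) (tau s (r-1)) a b = fmul (tau s (r-1)) (dTb (tau (s+1) r)) a b"
        by (rule fmul_comm)
      have E': "fmul (tau s r) (dT (tau (s+1) (r-1))) a b - fmul (dT (tau s r)) (tau (s+1) (r-1)) a b
        = fmul (dTb (tau s (r-1))) (tau (s+1) r) a b - fmul (tau s (r-1)) (dTb (tau (s+1) r)) a b"
        using E unfolding c1 c2 .
      have "hirotaT (tau s r) (tau (s + 1) (r - 1)) a b + hirotaTb (tau s (r - 1)) (tau (s + 1) r) a b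
        = (fmul (dTb (tau s (r-1))) (tau (s+1) r) a b - fmul (tau s (r-1)) (dTb (tau (s+1) r)) a b)
          - (fmul (tau s r) (dT (tau (s+1) (r-1))) a b - fmul (dT (tau s r)) (tau (s+1) (r-1)) a b)"
        unfolding hirotaT_def hirotaTb_def by (simp add: algebra_simps)
      also have "\<dots> = 0" unfolding E' by simp
      finally show ?thesis .
    qed
  qed
qed


end
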